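(* Let $\mathcal{X}=\{1,\dots,n\}$ with $n\geq2$, let $\pi$ be a strictly positive probability distribution on $\mathcal{X}$, let $P$ be an ergodic $\pi$-reversible transition matrix, and let $\alpha\in[0,1]$. Let $\mathcal{A}=\{S\subset\mathcal{X}:0<\pi(S)\leq 1/2\}$ and $h(S)=\frac{1}{\pi(S)}\sum_{x\in S,\,y\in S'}\pi(x)P(x,y)$. Let $U^*=\{x^*\}$ be a singleton with $U^*\in\operatorname*{argmax}_{S\in\mathcal{A}}h(S)$, and let $S^*\in\operatorname*{argmin}_{S\in\mathcal{A}}\|A_\alpha(S)-\Pi\|_{F,\pi}^2$. Then $$0\leq\|A_\alpha(U^* )-\Pi\|_{F,\pi}^2-\|A_\alpha(S^* )-\Pi\|_{F,\pi}^2\leq 2\alpha(1-\alpha).$$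
   Context: $S'=\mathcal{X}\setminus S$. $\pi$-reversible means $\pi(x)P(x,y)=\pi(y)P(y,x)$. For $S\neq\emptyset,\mathcal{X}$, $A_\alpha(S)=\alpha P+(1-\alpha)G_S$ where $G_S$ is the Gibbs kernel of the partition $\mathcal{X}=S\sqcup S'$: $G_S(x,y)=\pi(y)/\pi(\mathcal{O}(x))$ if $y\in\mathcal{O}(x)$ and $0$ otherwise, $\mathcal{O}(x)\in\{S,S'\}$ the block containing $x$. $\Pi$ is the matrix with every row equal to $\pi$; $\|M\|_{F,\pi}^2=\operatorname{Tr}(M^*M)$ with $M^*(x,y)=\pi(y)M(y,x)/\pi(x)$. *)

theory Defs
  imports Main "HOL-Analysis.Analysis"
begin

text \<open>State space: a finite type 'a (n = CARD('a)). Matrices are functions 'a => 'a => real.\<close>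

definition pmeas :: "('a \<Rightarrow> real) \<Rightarrow> 'a set \<Rightarrow> real" where
  "pmeas \<pi> S = (\<Sum>x\<in>S. \<pi> x)"

definition mmult :: "('a::finite \<Rightarrow> 'a \<Rightarrow> real) \<Rightarrow> ('a \<Rightarrow> 'a \<Rightarrow> real) \<Rightarrow> ('a \<Rightarrow> 'a \<Rightarrow> real)" where
  "mmult M N = (\<lambda>x y. \<Sum>z\<in>UNIV. M x z * N z y)"

fun mpow :: "('a::finite \<Rightarrow> 'a \<Rightarrow> real) \<Rightarrow> nat \<Rightarrow> ('a \<Rightarrow> 'a \<Rightarrow> real)" where
  "mpow M 0 = (\<lambda>x y. if x = y then 1 else 0)"
| "mpow M (Suc k) = mmult (mpow M k) M"

definition prob_dist_pos :: "('a::finite \<Rightarrow> real) \<Rightarrow> bool" where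
  "prob_dist_pos \<pi> \<longleftrightarrow> (\<forall>x. \<pi> x > 0) \<and> (\<Sum>x\<in>UNIV. \<pi> x) = 1"

definition stochastic :: "('a::finite \<Rightarrow> 'a \<Rightarrow> real) \<Rightarrow> bool" where
  "stochastic P \<longleftrightarrow> (\<forall>x y. P x y \<ge> 0) \<and> (\<forall>x. (\<Sum>y\<in>UNIV. P x y) = 1)"

text \<open>Ergodic (finite chain): irreducible and aperiodic, i.e. some power is entrywise positive.\<close>
definition ergodic :: "('a::finite \<Rightarrow> 'a \<Rightarrow> real) \<Rightarrow> bool" where
  "ergodic P \<longleftrightarrow> (\<exists>k. \<forall>x y. mpow P k x y > 0)"

definition reversible :: "('a \<Rightarrow> real) \<Rightarrow> ('a \<Rightarrow> 'a \<Rightarrow> real) \<Rightarrow> bool" where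
  "reversible \<pi> P \<longleftrightarrow> (\<forall>x y. \<pi> x * P x y = \<pi> y * P y x)"

definition gibbs :: "('a \<Rightarrow> real) \<Rightarrow> 'a set \<Rightarrow> ('a \<Rightarrow> 'a \<Rightarrow> real)" where
  "gibbs \<pi> S = (\<lambda>x y. let B = (if x \<in> S then S else - S) in
                        if y \<in> B then \<pi> y / pmeas \<pi> B else 0)"

definition Amat :: "('a \<Rightarrow> real) \<Rightarrow> ('a \<Rightarrow> 'a \<Rightarrow> real) \<Rightarrow> real \<Rightarrow> 'a set \<Rightarrow> ('a \<Rightarrow> 'a \<Rightarrow> real)" where
  "Amat \<pi> P \<alpha> S = (\<lambda>x y. \<alpha> * P x y + (1 - \<alpha>) * gibbs \<pi> S x y)"

definition PiMat :: "('a \<Rightarrow> real) \<Rightarrow> ('a \<Rightarrow> 'a \<Rightarrow> real)" where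
  "PiMat \<pi> = (\<lambda>x y. \<pi> y)"

definition adjoint :: "('a \<Rightarrow> real) \<Rightarrow> ('a \<Rightarrow> 'a \<Rightarrow> real) \<Rightarrow> ('a \<Rightarrow> 'a \<Rightarrow> real)" where
  "adjoint \<pi> M = (\<lambda>x y. \<pi> y * M y x / \<pi> x)"

definition trace :: "('a::finite \<Rightarrow> 'a \<Rightarrow> real) \<Rightarrow> real" where
  "trace M = (\<Sum>x\<in>UNIV. M x x)"

definition frob_sq :: "('a::finite \<Rightarrow> real) \<Rightarrow> ('a \<Rightarrow> 'a \<Rightarrow> real) \<Rightarrow> real" where
  "frob_sq \<pi> M = trace (mmult (adjoint \<pi> M) M)"

definition admissible :: "('a::finite \<Rightarrow> real) \<Rightarrow> 'a set set" where
  "admissible \<pi> = {S. 0 < pmeas \<pi> S \<and> pmeas \<pi> S \<le> 1/2}"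

definition cheeger_ratio :: "('a::finite \<Rightarrow> real) \<Rightarrow> ('a \<Rightarrow> 'a \<Rightarrow> real) \<Rightarrow> 'a set \<Rightarrow> real" where
  "cheeger_ratio \<pi> P S = (\<Sum>x\<in>S. \<Sum>y\<in>-S. \<pi> x * P x y) / pmeas \<pi> S"

end

theory Submission imports Defs begin

lemma sum_split: "(\<Sum>x\<in>UNIV. f x) = (\<Sum>x\<in>T. f x) + (\<Sum>x\<in>-T. (f x::real))" for T :: "'a::finite set"
proof -
  have "UNIV = T \<union> -T" by auto
  then show ?thesis by (metis Compl_disjoint finite sum.union_disjoint finite_UNIV)
qed

lemma frob_expand: "frob_sq \<pi> M = (\<Sum>x\<in>UNIV. \<Sum>y\<in>UNIV. \<pi> x * (M x y)^2 / \<pi> y)"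
  unfolding frob_sq_def trace_def mmult_def adjoint_def
  by (subst sum.swap) (simp add: power2_eq_square mult.assoc)

lemma gibbs_in: "x \<in> S \<Longrightarrow> gibbs \<pi> S x y = (if y \<in> S then \<pi> y / pmeas \<pi> S else 0)"
  by (simp add: gibbs_def)
lemma gibbs_out: "x \<notin> S \<Longrightarrow> gibbs \<pi> S x y = (if y \<in> -S then \<pi> y / pmeas \<pi> (-S) else 0)"
  by (simp add: gibbs_def)

lemma rowB:
  fixes \<pi> :: "'a::finite \<Rightarrow> real"
  assumes pos: "\<forall>y. \<pi> y > 0" and s1: "sum \<pi> UNIV = 1" and t: "t = pmeas \<pi> T" "0 < t"
  shows "(\<Sum>y\<in>UNIV. ((if y\<in>T then \<pi> y/t else 0) - \<pi> y)^2 / \<pi> y) = (1-t)/t"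
proof -
  have "(\<Sum>y\<in>UNIV. ((if y\<in>T then \<pi> y/t else 0) - \<pi> y)^2 / \<pi> y)
     = (\<Sum>y\<in>T. ((if y\<in>T then \<pi> y/t else 0) - \<pi> y)^2 / \<pi> y) + (\<Sum>y\<in>-T. ((if y\<in>T then \<pi> y/t else 0) - \<pi> y)^2 / \<pi> y)"
    by (rule sum_split)
  also have "(\<Sum>y\<in>T. ((if y\<in>T then \<pi> y/t else 0) - \<pi> y)^2 / \<pi> y) = (\<Sum>y\<in>T. \<pi> y * (1/t - 1)^2)"
  proof (rule sum.cong)
    fix y assume "y \<in> T" have "\<pi> y \<noteq> 0" using pos by (metis less_irrefl)
    then show "((if y\<in>T then \<pi> y/t else 0) - \<pi> y)^2 / \<pi> y = \<pi> y * (1/t - 1)^2"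
      using t \<open>y \<in> T\<close> by (simp add: power2_eq_square field_simps)
  qed simp
  also have "\<dots> = t * (1/t - 1)^2" using t by (simp add: pmeas_def sum_distrib_right)
  also have "(\<Sum>y\<in>-T. ((if y\<in>T then \<pi> y/t else 0) - \<pi> y)^2 / \<pi> y) = (\<Sum>y\<in>-T. \<pi> y)"
    apply (rule sum.cong, simp)
    using pos by (simp add: power2_eq_square)
  also have "\<dots> = 1 - t" using sum_split[of \<pi> T] s1 t by (simp add: pmeas_def)
  finally have X: "(\<Sum>y\<in>UNIV. ((if y\<in>T then \<pi> y/t else 0) - \<pi> y)^2 / \<pi> y) = t * (1/t - 1)^2 + (1 - t)" .
  have "t * (1/t - 1)^2 + (1 - t) = (1-t)/t" using t(2) by (simp add: field_simps power2_eq_square)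
  then show ?thesis using X by simp
qed

lemma rowC:
  fixes \<pi> :: "'a::finite \<Rightarrow> real"
  assumes pos: "\<forall>y. \<pi> y > 0" and s1: "sum \<pi> UNIV = 1" and t: "t = pmeas \<pi> T" "0 < t"
    and st: "sum (P x) UNIV = 1"
  shows "(\<Sum>y\<in>UNIV. (P x y - \<pi> y) * ((if y\<in>T then \<pi> y/t else 0) - \<pi> y) / \<pi> y) = ((\<Sum>y\<in>T. P x y) - t)/t"
proof -
  have "(\<Sum>y\<in>UNIV. (P x y - \<pi> y) * ((if y\<in>T then \<pi> y/t else 0) - \<pi> y) / \<pi> y)
     = (\<Sum>y\<in>T. (P x y - \<pi> y) * ((if y\<in>T then \<pi> y/t else 0) - \<pi> y) / \<pi> y) + (\<Sum>y\<in>-T. (P x y - \<pi> y) * ((if y\<in>T then \<pi> y/t else 0) - \<pi> y) / \<pi> y)"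
    by (rule sum_split)
  also have "(\<Sum>y\<in>T. (P x y - \<pi> y) * ((if y\<in>T then \<pi> y/t else 0) - \<pi> y) / \<pi> y) = (\<Sum>y\<in>T. (P x y - \<pi> y) * (1/t - 1))"
  proof (rule sum.cong)
    fix y assume "y \<in> T" have "\<pi> y \<noteq> 0" using pos by (metis less_irrefl)
    then show "(P x y - \<pi> y) * ((if y\<in>T then \<pi> y/t else 0) - \<pi> y) / \<pi> y = (P x y - \<pi> y) * (1/t - 1)"
      using t \<open>y \<in> T\<close> by (simp add: field_simps)
  qed simp
  also have "\<dots> = ((\<Sum>y\<in>T. P x y) - t) * (1/t - 1)" using t by (simp add: pmeas_def sum_subtractf flip: sum_distrib_right)
  also have "(\<Sum>y\<in>-T. (P x y - \<pi> y) * ((if y\<in>T then \<pi> y/t else 0) - \<pi> y) / \<pi> y) = (\<Sum>y\<in>-T. \<pi> y - P x y)"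
  proof (rule sum.cong)
    fix y assume "y \<in> -T" have "\<pi> y \<noteq> 0" using pos by (metis less_irrefl)
    then show "(P x y - \<pi> y) * ((if y\<in>T then \<pi> y/t else 0) - \<pi> y) / \<pi> y = \<pi> y - P x y"
      using \<open>y \<in> -T\<close> by (simp add: field_simps)
  qed simp
  also have "\<dots> = (1 - t) - (1 - (\<Sum>y\<in>T. P x y))" using sum_split[of \<pi> T] sum_split[of "P x" T] s1 st t by (simp add: pmeas_def sum_subtractf)
  finally have X: "(\<Sum>y\<in>UNIV. (P x y - \<pi> y) * ((if y\<in>T then \<pi> y/t else 0) - \<pi> y) / \<pi> y) = ((\<Sum>y\<in>T. P x y) - t) * (1/t - 1) + ((1 - t) - (1 - (\<Sum>y\<in>T. P x y)))" .
  have "((\<Sum>y\<in>T. P x y) - t) * (1/t - 1) + ((1 - t) - (1 - (\<Sum>y\<in>T. P x y))) = ((\<Sum>y\<in>T. P x y) - t)/t" using t(2) by (simp add: field_simps)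
  then show ?thesis using X by simp
qed


lemma block_sum:
  fixes \<pi> :: "'a::finite \<Rightarrow> real"
  assumes st: "\<forall>x. sum (P x) UNIV = 1"
  shows "(\<Sum>x\<in>T. \<pi> x * (\<Sum>y\<in>T. P x y)) = pmeas \<pi> T - (\<Sum>x\<in>T. \<Sum>y\<in>-T. \<pi> x * P x y)"
proof -
  have "(\<Sum>x\<in>T. \<pi> x * (\<Sum>y\<in>T. P x y)) = (\<Sum>x\<in>T. \<pi> x - (\<Sum>y\<in>-T. \<pi> x * P x y))"
  proof (rule sum.cong)
    fix x show "\<pi> x * (\<Sum>y\<in>T. P x y) = \<pi> x - (\<Sum>y\<in>-T. \<pi> x * P x y)"
    proof -
      have "sum (P x) T = 1 - sum (P x) (-T)" using sum_split[of "P x" T] st by simp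
      then show ?thesis by (simp add: right_diff_distrib flip: sum_distrib_left)
    qed
  qed simp
  then show ?thesis by (simp add: pmeas_def sum_subtractf)
qed

lemma flow_sym:
  fixes \<pi> :: "'a::finite \<Rightarrow> real"
  assumes rev: "reversible \<pi> P"
  shows "(\<Sum>x\<in>-S. \<Sum>y\<in>-(-S). \<pi> x * P x y) = (\<Sum>x\<in>S. \<Sum>y\<in>-S. \<pi> x * P x y)"
proof -
  have "(\<Sum>x\<in>-S. \<Sum>y\<in>S. \<pi> x * P x y) = (\<Sum>x\<in>-S. \<Sum>y\<in>S. \<pi> y * P y x)"
    using rev unfolding reversible_def by simp
  also have "\<dots> = (\<Sum>y\<in>S. \<Sum>x\<in>-S. \<pi> y * P y x)" by (rule sum.swap)
  finally show ?thesis by simp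
qed

lemma frob_formula:
  fixes \<pi> :: "'a::finite \<Rightarrow> real"
  assumes pd: "prob_dist_pos \<pi>" and sto: "stochastic P" and rev: "reversible \<pi> P"
    and p0: "0 < pmeas \<pi> S" and p1: "pmeas \<pi> S < 1"
  shows "frob_sq \<pi> (\<lambda>x y. Amat \<pi> P \<alpha> S x y - PiMat \<pi> x y)
    = \<alpha>^2 * (\<Sum>x\<in>UNIV. \<Sum>y\<in>UNIV. \<pi> x * (P x y - \<pi> y)^2 / \<pi> y) + (1-\<alpha>)^2
      + 2*\<alpha>*(1-\<alpha>) * (1 - (\<Sum>x\<in>S. \<Sum>y\<in>-S. \<pi> x * P x y) / pmeas \<pi> S
                             - (\<Sum>x\<in>S. \<Sum>y\<in>-S. \<pi> x * P x y) / (1 - pmeas \<pi> S))"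
proof -
  define p where "p = pmeas \<pi> S"
  define Q where "Q = (\<Sum>x\<in>S. \<Sum>y\<in>-S. \<pi> x * P x y)"
  define G where "G = gibbs \<pi> S"
  have pos: "\<forall>y. \<pi> y > 0" and s1: "sum \<pi> UNIV = 1" using pd unfolding prob_dist_pos_def by auto
  have st: "\<forall>x. sum (P x) UNIV = 1" using sto unfolding stochastic_def by auto
  have pc: "pmeas \<pi> (-S) = 1 - p" using sum_split[of \<pi> S] s1 unfolding p_def pmeas_def by simp
  have hs: "(\<Sum>x\<in>S. \<pi> x) = p" unfolding p_def pmeas_def ..
  have hc: "(\<Sum>x\<in>-S. \<pi> x) = 1 - p" using pc unfolding pmeas_def .
  have "frob_sq \<pi> (\<lambda>x y. Amat \<pi> P \<alpha> S x y - PiMat \<pi> x y)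
     = (\<Sum>x\<in>UNIV. \<Sum>y\<in>UNIV. \<pi> x * (\<alpha> * (P x y - \<pi> y) + (1-\<alpha>) * (G x y - \<pi> y))^2 / \<pi> y)"
    unfolding frob_expand Amat_def PiMat_def G_def by (simp add: algebra_simps)
  also have "\<dots> = (\<Sum>x\<in>UNIV. \<Sum>y\<in>UNIV. \<alpha>^2 * (\<pi> x * (P x y - \<pi> y)^2 / \<pi> y)
        + (1-\<alpha>)^2 * (\<pi> x * (G x y - \<pi> y)^2 / \<pi> y)
        + 2*\<alpha>*(1-\<alpha>) * (\<pi> x * ((P x y - \<pi> y) * (G x y - \<pi> y) / \<pi> y)))"
    by (intro sum.cong refl) (simp add: power2_eq_square algebra_simps add_divide_distrib diff_divide_distrib)
  also have "\<dots> = \<alpha>^2 * (\<Sum>x\<in>UNIV. \<Sum>y\<in>UNIV. \<pi> x * (P x y - \<pi> y)^2 / \<pi> y)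
        + (1-\<alpha>)^2 * (\<Sum>x\<in>UNIV. \<pi> x * (\<Sum>y\<in>UNIV. (G x y - \<pi> y)^2 / \<pi> y))
        + 2*\<alpha>*(1-\<alpha>) * (\<Sum>x\<in>UNIV. \<pi> x * (\<Sum>y\<in>UNIV. (P x y - \<pi> y) * (G x y - \<pi> y) / \<pi> y))"
    by (simp add: sum.distrib sum_distrib_left)
  also have "(\<Sum>x\<in>UNIV. \<pi> x * (\<Sum>y\<in>UNIV. (G x y - \<pi> y)^2 / \<pi> y)) = 1"
  proof -
    have a: "(\<Sum>x\<in>S. \<pi> x * (\<Sum>y\<in>UNIV. (G x y - \<pi> y)^2 / \<pi> y)) = (\<Sum>x\<in>S. \<pi> x * ((1-p)/p))"
    proof (rule sum.cong)
      fix x assume "x \<in> S"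
      then show "\<pi> x * (\<Sum>y\<in>UNIV. (G x y - \<pi> y)^2 / \<pi> y) = \<pi> x * ((1-p)/p)"
        using rowB[OF pos s1, of p S] p0 unfolding G_def p_def by (simp add: gibbs_in)
    qed simp
    have b: "(\<Sum>x\<in>-S. \<pi> x * (\<Sum>y\<in>UNIV. (G x y - \<pi> y)^2 / \<pi> y)) = (\<Sum>x\<in>-S. \<pi> x * ((1-(1-p))/(1-p)))"
    proof (rule sum.cong)
      fix x assume "x \<in> -S"
      then show "\<pi> x * (\<Sum>y\<in>UNIV. (G x y - \<pi> y)^2 / \<pi> y) = \<pi> x * ((1-(1-p))/(1-p))"
        using rowB[OF pos s1, of "pmeas \<pi> (-S)" "-S"] p1 pc unfolding G_def p_def by (simp add: gibbs_out)
    qed simp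
    show ?thesis
      apply (subst sum_split[where T=S and f="\<lambda>x. \<pi> x * (\<Sum>y\<in>UNIV. (G x y - \<pi> y)^2 / \<pi> y)"])
      unfolding a b sum_distrib_right[symmetric] hs hc using p0 p1 unfolding p_def[symmetric]
      by (simp add: field_simps)
  qed
  also have "(\<Sum>x\<in>UNIV. \<pi> x * (\<Sum>y\<in>UNIV. (P x y - \<pi> y) * (G x y - \<pi> y) / \<pi> y)) = 1 - Q/p - Q/(1-p)"
  proof -
    have a: "(\<Sum>x\<in>S. \<pi> x * (\<Sum>y\<in>UNIV. (P x y - \<pi> y) * (G x y - \<pi> y) / \<pi> y)) = (\<Sum>x\<in>S. \<pi> x * (\<Sum>y\<in>S. P x y)) / p - p"
    proof -
      have "(\<Sum>x\<in>S. \<pi> x * (\<Sum>y\<in>UNIV. (P x y - \<pi> y) * (G x y - \<pi> y) / \<pi> y)) = (\<Sum>x\<in>S. \<pi> x * (\<Sum>y\<in>S. P x y) / p - \<pi> x)"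
      proof (rule sum.cong)
        fix x assume "x \<in> S"
        then show "\<pi> x * (\<Sum>y\<in>UNIV. (P x y - \<pi> y) * (G x y - \<pi> y) / \<pi> y) = \<pi> x * (\<Sum>y\<in>S. P x y) / p - \<pi> x"
        proof -
          have r: "(\<Sum>y\<in>UNIV. (P x y - \<pi> y) * (G x y - \<pi> y) / \<pi> y) = ((\<Sum>y\<in>S. P x y) - p)/p"
            using rowC[OF pos s1, of p S P x] p0 st \<open>x \<in> S\<close> unfolding G_def p_def by (simp add: gibbs_in)
          show ?thesis unfolding r using p0 unfolding p_def[symmetric] by (simp add: field_simps)
        qed
      qed simp
      then show ?thesis by (simp add: sum_subtractf p_def pmeas_def flip: sum_divide_distrib)
    qed
    have b: "(\<Sum>x\<in>-S. \<pi> x * (\<Sum>y\<in>UNIV. (P x y - \<pi> y) * (G x y - \<pi> y) / \<pi> y)) = (\<Sum>x\<in>-S. \<pi> x * (\<Sum>y\<in>-S. P x y)) / (1-p) - (1-p)"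
    proof -
      have "(\<Sum>x\<in>-S. \<pi> x * (\<Sum>y\<in>UNIV. (P x y - \<pi> y) * (G x y - \<pi> y) / \<pi> y)) = (\<Sum>x\<in>-S. \<pi> x * (\<Sum>y\<in>-S. P x y) / (1-p) - \<pi> x)"
      proof (rule sum.cong)
        fix x assume "x \<in> -S"
        then show "\<pi> x * (\<Sum>y\<in>UNIV. (P x y - \<pi> y) * (G x y - \<pi> y) / \<pi> y) = \<pi> x * (\<Sum>y\<in>-S. P x y) / (1-p) - \<pi> x"
        proof -
          have r: "(\<Sum>y\<in>UNIV. (P x y - \<pi> y) * (G x y - \<pi> y) / \<pi> y) = ((\<Sum>y\<in>-S. P x y) - (1-p))/(1-p)"
            using rowC[OF pos s1, of "pmeas \<pi> (-S)" "-S" P x] p1 pc st \<open>x \<in> -S\<close> unfolding G_def p_def by (simp add: gibbs_out)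
          show ?thesis unfolding r using p1 unfolding p_def[symmetric] by (simp add: field_simps)
        qed
      qed simp
      then show ?thesis using pc by (simp add: sum_subtractf pmeas_def flip: sum_divide_distrib)
    qed
    have c: "(\<Sum>x\<in>S. \<pi> x * (\<Sum>y\<in>S. P x y)) = p - Q"
      using block_sum[OF st, of \<pi> S] unfolding p_def Q_def .
    have d: "(\<Sum>x\<in>-S. \<pi> x * (\<Sum>y\<in>-S. P x y)) = (1-p) - Q"
      using block_sum[OF st, of \<pi> "-S"] flow_sym[OF rev, of S] pc unfolding Q_def by simp
    show ?thesis
      apply (subst sum_split[where T=S and f="\<lambda>x. \<pi> x * (\<Sum>y\<in>UNIV. (P x y - \<pi> y) * (G x y - \<pi> y) / \<pi> y)"])
      unfolding a b c d using p0 p1 unfolding p_def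
      by (simp add: field_simps)
  qed
  finally show ?thesis unfolding p_def Q_def by simp
qed


lemma Q_bounds:
  fixes \<pi> :: "'a::finite \<Rightarrow> real"
  assumes pd: "prob_dist_pos \<pi>" and sto: "stochastic P"
  shows "0 \<le> (\<Sum>x\<in>S. \<Sum>y\<in>-S. \<pi> x * P x y)" and "(\<Sum>x\<in>S. \<Sum>y\<in>-S. \<pi> x * P x y) \<le> pmeas \<pi> S"
proof -
  have pos: "\<And>y. \<pi> y > 0" using pd unfolding prob_dist_pos_def by auto
  have nn: "\<And>x y. P x y \<ge> 0" and st: "\<And>x. sum (P x) UNIV = 1" using sto unfolding stochastic_def by auto
  show "0 \<le> (\<Sum>x\<in>S. \<Sum>y\<in>-S. \<pi> x * P x y)"
    by (intro sum_nonneg mult_nonneg_nonneg) (auto intro: less_imp_le pos nn)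
  have "(\<Sum>x\<in>S. \<Sum>y\<in>-S. \<pi> x * P x y) \<le> (\<Sum>x\<in>S. \<pi> x)"
  proof (rule sum_mono)
    fix x
    have "sum (P x) (-S) \<le> 1" using sum_split[of "P x" S] st[of x] sum_nonneg[of S "P x"] nn by simp
    then have "\<pi> x * sum (P x) (-S) \<le> \<pi> x * 1" using pos[of x] by (intro mult_left_mono) auto
    then show "(\<Sum>y\<in>-S. \<pi> x * P x y) \<le> \<pi> x" by (simp add: sum_distrib_left)
  qed
  then show "(\<Sum>x\<in>S. \<Sum>y\<in>-S. \<pi> x * P x y) \<le> pmeas \<pi> S" by (simp add: pmeas_def)
qed

theorem proposition4p8:
  fixes \<pi> :: "'a::finite \<Rightarrow> real" and P :: "'a \<Rightarrow> 'a \<Rightarrow> real"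
    and \<alpha> :: real and xs :: 'a and Ss :: "'a set"
  assumes "CARD('a) \<ge> 2"
    and "prob_dist_pos \<pi>"
    and "stochastic P" and "ergodic P" and "reversible \<pi> P"
    and "0 \<le> \<alpha>" and "\<alpha> \<le> 1"
    and "{xs} \<in> admissible \<pi>"
    and "\<forall>S\<in>admissible \<pi>. cheeger_ratio \<pi> P S \<le> cheeger_ratio \<pi> P {xs}"
    and "Ss \<in> admissible \<pi>"
    and "\<forall>S\<in>admissible \<pi>.
           frob_sq \<pi> (\<lambda>x y. Amat \<pi> P \<alpha> Ss x y - PiMat \<pi> x y)
             \<le> frob_sq \<pi> (\<lambda>x y. Amat \<pi> P \<alpha> S x y - PiMat \<pi> x y)"
  shows "0 \<le> frob_sq \<pi> (\<lambda>x y. Amat \<pi> P \<alpha> {xs} x y - PiMat \<pi> x y)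
              - frob_sq \<pi> (\<lambda>x y. Amat \<pi> P \<alpha> Ss x y - PiMat \<pi> x y)
       \<and> frob_sq \<pi> (\<lambda>x y. Amat \<pi> P \<alpha> {xs} x y - PiMat \<pi> x y)
              - frob_sq \<pi> (\<lambda>x y. Amat \<pi> P \<alpha> Ss x y - PiMat \<pi> x y) \<le> 2 * \<alpha> * (1 - \<alpha>)"
proof
  show "0 \<le> frob_sq \<pi> (\<lambda>x y. Amat \<pi> P \<alpha> {xs} x y - PiMat \<pi> x y)
              - frob_sq \<pi> (\<lambda>x y. Amat \<pi> P \<alpha> Ss x y - PiMat \<pi> x y)"
    using assms(8,11) by auto
  define U where "U = {xs}"
  define pU where "pU = pmeas \<pi> U"
  define pS where "pS = pmeas \<pi> Ss"
  define QU where "QU = (\<Sum>x\<in>U. \<Sum>y\<in>-U. \<pi> x * P x y)"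
  define QS where "QS = (\<Sum>x\<in>Ss. \<Sum>y\<in>-Ss. \<pi> x * P x y)"
  define K where "K = \<alpha>^2 * (\<Sum>x\<in>UNIV. \<Sum>y\<in>UNIV. \<pi> x * (P x y - \<pi> y)^2 / \<pi> y) + (1-\<alpha>)^2"
  have pU: "0 < pU" "pU \<le> 1/2" using assms(8) unfolding admissible_def pU_def U_def by auto
  have pS: "0 < pS" "pS \<le> 1/2" using assms(10) unfolding admissible_def pS_def by auto
  have FU: "frob_sq \<pi> (\<lambda>x y. Amat \<pi> P \<alpha> U x y - PiMat \<pi> x y) = K + 2*\<alpha>*(1-\<alpha>) * (1 - QU/pU - QU/(1-pU))"
    using frob_formula[OF assms(2,3,5), of U \<alpha>] pU unfolding K_def QU_def pU_def by simp
  have FS: "frob_sq \<pi> (\<lambda>x y. Amat \<pi> P \<alpha> Ss x y - PiMat \<pi> x y) = K + 2*\<alpha>*(1-\<alpha>) * (1 - QS/pS - QS/(1-pS))"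
    using frob_formula[OF assms(2,3,5), of Ss \<alpha>] pS unfolding K_def QS_def pS_def by simp
  have QS0: "0 \<le> QS" using Q_bounds(1)[OF assms(2,3)] unfolding QS_def .
  have QU0: "0 \<le> QU" using Q_bounds(1)[OF assms(2,3)] unfolding QU_def .
  have QU1: "QU \<le> pU" using Q_bounds(2)[OF assms(2,3)] unfolding QU_def pU_def .
  have f1: "QS/(1-pS) \<le> QS/pS" using QS0 pS by (intro divide_left_mono) auto
  have f2: "QS/pS \<le> QU/pU" using assms(9,10) unfolding cheeger_ratio_def QS_def pS_def QU_def pU_def U_def by auto
  have f3: "QU/pU \<le> 1" using QU1 pU by simp
  have f4: "0 \<le> QU/(1-pU)" using QU0 pU by simp
  have D: "QS/pS + QS/(1-pS) - QU/pU - QU/(1-pU) \<le> 1" using f1 f2 f3 f4 by linarith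
  have a0: "0 \<le> 2*\<alpha>*(1-\<alpha>)" using assms(6,7) by simp
  have "frob_sq \<pi> (\<lambda>x y. Amat \<pi> P \<alpha> U x y - PiMat \<pi> x y) - frob_sq \<pi> (\<lambda>x y. Amat \<pi> P \<alpha> Ss x y - PiMat \<pi> x y)
     = 2*\<alpha>*(1-\<alpha>) * (QS/pS + QS/(1-pS) - QU/pU - QU/(1-pU))"
    unfolding FU FS by (simp add: algebra_simps)
  also have "\<dots> \<le> 2*\<alpha>*(1-\<alpha>) * 1" using D a0 by (intro mult_left_mono) auto
  finally show "frob_sq \<pi> (\<lambda>x y. Amat \<pi> P \<alpha> {xs} x y - PiMat \<pi> x y)
              - frob_sq \<pi> (\<lambda>x y. Amat \<pi> P \<alpha> Ss x y - PiMat \<pi> x y) \<le> 2 * \<alpha> * (1 - \<alpha>)"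
    unfolding U_def by simp
qed

end
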